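(* Fix real $a$, $b>0$, $c>0$ and a prior $F$ with support $[\alpha,\beta]\subset(0,c)$ and mean $M_1$. Let $\mathcal S$ be the set of symmetric information structures in which each player privately observes a signal about his own type only, the same signal rule being applied to both players and signals being independent across players conditional on the type profile. For $\pi\in\mathcal S$, let $\hat\theta_\pi=E[\theta\mid s_\pi]$ be a player's posterior-mean cost; posterior means are i.i.d. across players. The affine benchmark induced by $\pi$ is the unique symmetric Bayesian Nash equilibrium of the affine relaxation of the contest in which each player's type is his posterior-mean cost (distributed as $\hat\theta_\pi$); when $\hat\theta_\pi$ is degenerate, its expected effort is defined by continuity as the limit of the expected effort as the variance of the posterior-mean distribution tends to $0$ with the mean fixed. Let $\mathcal E(\pi)$ denote the ex ante expected effort in the affine benchmark induced by $\pi$. Then $\mathcal E(\pi)$ depends on $\pi$ only through $\operatorname{Var}(\hat\theta_\pi)$. Consequently, a designer maximizing $\mathcal E$ over $\mathcal S$ chooses no disclosure (the uninformative signal) if $a>0$, full disclosure (signal revealing the type) if $a<0$, and is indifferent among all signals in $\mathcal S$ if $a=0$. Equivalently, if $\pi$ is more Blackwell-informative than $\pi'$, then $\mathcal E(\pi)\le\mathcal E(\pi')$ when $a>0$ and $\mathcal E(\pi)\ge\mathcal E(\pi')$ when $a<0$.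
   Context: The contest: two players with cost types; a type-$\theta$ player choosing effort $\tilde x$ against opponent strategy $x(\cdot)$ receives expected payoff $E[P(\tilde x,x(\text{opponent's type}))]-\theta\tilde x$, where $P(x,y)=\tfrac12+(x-y)\bigl(c-b(x+y)+axy\bigr)$. Because payoffs are linear in the cost, a player informed by a signal evaluates payoffs using his posterior-mean cost. The affine relaxation allows actions in $\mathbb R$ and uses the raw, untruncated $P$; for $a=0$ each type $\hat\theta$ plays the dominant strategy $(c-\hat\theta)/(2b)$. *)

theory Defs
  imports "HOL-Probability.Probability"
begin

(* Contest success function P(x,y) (raw, untruncated) *)
definition Pcs :: "real \<Rightarrow> real \<Rightarrow> real \<Rightarrow> real \<Rightarrow> real \<Rightarrow> real" where
  "Pcs a b c x y = 1/2 + (x - y) * (c - b * (x + y) + a * x * y)"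

definition relax_payoff ::
  "real \<Rightarrow> real \<Rightarrow> real \<Rightarrow> real measure \<Rightarrow> (real \<Rightarrow> real) \<Rightarrow> real \<Rightarrow> real \<Rightarrow> real" where
  "relax_payoff a b c G x t z = (\<integral>t'. Pcs a b c z (x t') \<partial>G) - t * z"

definition sym_BNE :: "real \<Rightarrow> real \<Rightarrow> real \<Rightarrow> real measure \<Rightarrow> (real \<Rightarrow> real) \<Rightarrow> bool" where
  "sym_BNE a b c G x \<longleftrightarrow> x \<in> borel_measurable G \<and> integrable G (\<lambda>t. (x t)^2) \<and>
     (AE t in G. \<forall>z. relax_payoff a b c G x t z \<le> relax_payoff a b c G x t (x t))"

definition eq_effort :: "real \<Rightarrow> real \<Rightarrow> real \<Rightarrow> real measure \<Rightarrow> real" where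
  "eq_effort a b c G = (THE e. \<exists>x. sym_BNE a b c G x \<and> e = (\<integral>t. x t \<partial>G))"

definition dist_mean :: "real measure \<Rightarrow> real" where
  "dist_mean G = (\<integral>t. t \<partial>G)"

definition dist_var :: "real measure \<Rightarrow> real" where
  "dist_var G = (\<integral>t. (t - dist_mean G)^2 \<partial>G)"

definition limit_effort :: "real \<Rightarrow> real \<Rightarrow> real \<Rightarrow> real \<Rightarrow> real" where
  "limit_effort a b c \<mu> = (THE L. \<forall>Gs :: nat \<Rightarrow> real measure.
     ((\<forall>n. prob_space (Gs n) \<and> sets (Gs n) = sets borel \<and> integrable (Gs n) (\<lambda>t. t^2) \<and>
           dist_mean (Gs n) = \<mu> \<and> dist_var (Gs n) > 0) \<and>
      (\<lambda>n. dist_var (Gs n)) \<longlonglongrightarrow> 0)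
     \<longrightarrow> (\<lambda>n. eq_effort a b c (Gs n)) \<longlonglongrightarrow> L)"

definition benchmark_effort :: "real \<Rightarrow> real \<Rightarrow> real \<Rightarrow> real measure \<Rightarrow> real" where
  "benchmark_effort a b c G =
     (if dist_var G > 0 then eq_effort a b c G else limit_effort a b c (dist_mean G))"

definition prior_support :: "real measure \<Rightarrow> real \<Rightarrow> real \<Rightarrow> bool" where
  "prior_support F \<alpha> \<beta> \<longleftrightarrow> \<alpha> \<le> \<beta> \<and> emeasure F {\<alpha>..\<beta>} = 1 \<and>
     (\<forall>x\<in>{\<alpha>..\<beta>}. \<forall>e>0. 0 < emeasure F {x - e<..<x + e})"

(* A (symmetric, private, conditionally independent) information structure is given by the
   common signal rule: a Markov kernel from a player's own type to the signal space \<Sigma>. *)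
definition info_structs :: "'b measure \<Rightarrow> (real \<Rightarrow> 'b measure) set" where
  "info_structs \<Sigma> = {K. K \<in> borel \<rightarrow>\<^sub>M prob_algebra \<Sigma>}"

definition joint :: "real measure \<Rightarrow> 'b measure \<Rightarrow> (real \<Rightarrow> 'b measure) \<Rightarrow> (real \<times> 'b) measure" where
  "joint F \<Sigma> K = F \<bind> (\<lambda>\<theta>. distr (K \<theta>) (borel \<Otimes>\<^sub>M \<Sigma>) (\<lambda>s. (\<theta>, s)))"

definition post_mean :: "real measure \<Rightarrow> 'b measure \<Rightarrow> (real \<Rightarrow> 'b measure) \<Rightarrow> real \<times> 'b \<Rightarrow> real" where
  "post_mean F \<Sigma> K = real_cond_exp (joint F \<Sigma> K) (vimage_algebra (space (joint F \<Sigma> K)) snd \<Sigma>) fst"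

definition post_dist :: "real measure \<Rightarrow> 'b measure \<Rightarrow> (real \<Rightarrow> 'b measure) \<Rightarrow> real measure" where
  "post_dist F \<Sigma> K = distr (joint F \<Sigma> K) borel (post_mean F \<Sigma> K)"

definition post_var :: "real measure \<Rightarrow> 'b measure \<Rightarrow> (real \<Rightarrow> 'b measure) \<Rightarrow> real" where
  "post_var F \<Sigma> K = dist_var (post_dist F \<Sigma> K)"

definition exp_effort ::
  "real \<Rightarrow> real \<Rightarrow> real \<Rightarrow> real measure \<Rightarrow> 'b measure \<Rightarrow> (real \<Rightarrow> 'b measure) \<Rightarrow> real" where
  "exp_effort a b c F \<Sigma> K = benchmark_effort a b c (post_dist F \<Sigma> K)"

definition no_disclosure :: "real \<Rightarrow> unit measure" where
  "no_disclosure = (\<lambda>\<theta>. return (count_space UNIV) ())"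

definition full_disclosure :: "real \<Rightarrow> real measure" where
  "full_disclosure = (\<lambda>\<theta>. return borel \<theta>)"

definition more_informative ::
  "'b measure \<Rightarrow> (real \<Rightarrow> 'b measure) \<Rightarrow> 'c measure \<Rightarrow> (real \<Rightarrow> 'c measure) \<Rightarrow> bool" where
  "more_informative \<Sigma> K \<Sigma>' K' \<longleftrightarrow>
     (\<exists>g \<in> \<Sigma> \<rightarrow>\<^sub>M prob_algebra \<Sigma>'. \<forall>\<theta>. K' \<theta> = K \<theta> \<bind> g)"

end

theory Submission
  imports Defs
begin

definition eff :: "real \<Rightarrow> real \<Rightarrow> real \<Rightarrow> real \<Rightarrow> real \<Rightarrow> real" where
  "eff a b c \<mu> s = (if a = 0 then (c - \<mu>) / (2 * b)
     else (b - sqrt ((b^2 - a*(c-\<mu>) + sqrt ((b^2 - a*(c-\<mu>))^2 + a^2 * s)) / 2)) / a)"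

lemma pcs_expand: "Pcs a b c z y = (1/2 + c*z - b*z^2) + (a*z^2 - c) * y + (b - a*z) * y^2"
  by (simp add: Pcs_def algebra_simps power2_eq_square)

lemma integral_quad:
  fixes x :: "'a \<Rightarrow> real"
  assumes "prob_space G" "integrable G x" "integrable G (\<lambda>t. (x t)^2)"
  shows "(\<integral>t. A0 + A1 * x t + A2 * (x t)^2 \<partial>G) = A0 + A1 * (\<integral>t. x t \<partial>G) + A2 * (\<integral>t. (x t)^2 \<partial>G)"
proof -
  interpret prob_space G by fact
  have i1: "integrable G (\<lambda>t. A0 + A1 * x t)" using assms by simp
  have i2: "integrable G (\<lambda>t. A2 * (x t)^2)" using assms by simp
  have "(\<integral>t. A0 + A1 * x t + A2 * (x t)^2 \<partial>G) = (\<integral>t. A0 + A1 * x t \<partial>G) + (\<integral>t. A2 * (x t)^2 \<partial>G)"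
    using Bochner_Integration.integral_add[OF i1 i2] by simp
  also have "(\<integral>t. A0 + A1 * x t \<partial>G) = A0 + A1 * (\<integral>t. x t \<partial>G)"
    using assms by (subst Bochner_Integration.integral_add) (auto simp: prob_space)
  finally show ?thesis by simp
qed

lemma payoff_eq:
  fixes x :: "real \<Rightarrow> real"
  assumes "prob_space G" "integrable G x" "integrable G (\<lambda>t. (x t)^2)"
  shows "relax_payoff a b c G x t z = 1/2 - c*(\<integral>t. x t \<partial>G) + b*(\<integral>t. (x t)^2 \<partial>G)
     + z*(c - a*(\<integral>t. (x t)^2 \<partial>G) - t) - z^2*(b - a*(\<integral>t. x t \<partial>G))"
proof -
  have "relax_payoff a b c G x t z = (1/2 + c*z - b*z^2) + (a*z^2 - c) * (\<integral>t. x t \<partial>G) + (b - a*z) * (\<integral>t. (x t)^2 \<partial>G) - t * z"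
    unfolding relax_payoff_def pcs_expand by (subst integral_quad[OF assms]) simp
  then show ?thesis by (simp add: algebra_simps)
qed

lemma eff_char:
  fixes a b c \<mu> s m1 m2 A :: real
  assumes b: "b > 0" and s: "s > 0" and A: "A = b - a*m1" "A > 0"
    and e1: "2*A*m1 = c - a*m2 - \<mu>" and e2: "4*A^2*m2 = (c - a*m2 - \<mu>)^2 + s"
  shows "m1 = eff a b c \<mu> s"
proof (cases "a = 0")
  case True
  then show ?thesis using A e1 b by (simp add: eff_def field_simps)
next
  case False
  define k where "k = b^2 - a*(c-\<mu>)"
  define u where "u = A"
  have u: "u > 0" using A u_def by simp
  have am: "a*m1 = b - u" using A u_def by simp
  have "c - a*m2 - \<mu> = 2*A*m1" using e1 by simp
  then have "4*A^2*m2 = (2*A*m1)^2 + s" using e2 by simp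
  then have m2: "4*u^2*m2 = 4*u^2*m1^2 + s" unfolding u_def by (simp add: power_mult_distrib)
  have "a*(2*A*m1) = a*(c - a*m2 - \<mu>)" using e1 by simp
  then have "2*u*(a*m1) = a*(c-\<mu>) - a^2*m2" by (simp add: u_def algebra_simps power2_eq_square)
  then have f1: "2*u*(b-u) = a*(c-\<mu>) - a^2*m2" using am by simp
  have "a^2*(4*u^2*m2) = a^2*(4*u^2*m1^2 + s)" using m2 by simp
  also have "\<dots> = 4*u^2*(a*m1)^2 + a^2 * s" by (simp add: power2_eq_square algebra_simps)
  finally have f2: "a^2*(4*u^2*m2) = 4*u^2*(b-u)^2 + a^2 * s" using am by simp
  have f3: "4*u^2*(k - u^2) = -(a^2 * s)"
  proof -
    have "4*u^2*(2*u*(b-u)) = 4*u^2*(a*(c-\<mu>) - a^2*m2)" using f1 by simp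
    also have "\<dots> = 4*u^2*(a*(c-\<mu>)) - a^2*(4*u^2*m2)" by (simp add: algebra_simps)
    finally have "4*u^2*(2*u*(b-u)) = 4*u^2*(a*(c-\<mu>)) - a^2*(4*u^2*m2)" .
    then have "4*u^2*(2*u*(b-u)) = 4*u^2*(a*(c-\<mu>)) - 4*u^2*(b-u)^2 - a^2 * s" using f2 by simp
    then show ?thesis unfolding k_def by (simp add: power2_eq_square algebra_simps)
  qed
  have as: "a^2 * s \<ge> 0" using s by simp
  have "u^2 \<ge> k"
  proof (rule ccontr)
    assume "\<not> u^2 \<ge> k"
    then have "4*u^2*(k - u^2) > 0" using u by simp
    then show False using f3 as by simp
  qed
  moreover have "u^2 > 0" using u by simp
  ultimately have nn: "2*u^2 - k \<ge> 0" by linarith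
  have sq: "(2*u^2 - k)^2 = k^2 + a^2 * s" using f3 by (simp add: power2_eq_square algebra_simps)
  have "sqrt (k^2 + a^2 * s) = 2*u^2 - k" using sq nn by (metis real_sqrt_abs abs_of_nonneg)
  then have "(k + sqrt (k^2 + a^2 * s))/2 = u^2" by simp
  then have "sqrt ((k + sqrt (k^2 + a^2 * s))/2) = u" using u by simp
  then have "eff a b c \<mu> s = (b - u)/a" using False unfolding eff_def k_def by simp
  moreover have "m1 = (b - u)/a" using am False by (simp add: eq_divide_eq mult.commute)
  ultimately show ?thesis by simp
qed

lemma eff_props:
  fixes a b c \<mu> s :: real
  assumes b: "b > 0" and s: "s > 0"
  defines "e \<equiv> eff a b c \<mu> s"
  shows "b - a*e > 0" "2*(b - a*e)*e = c - a*(e^2 + s/(4*(b-a*e)^2)) - \<mu>"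
proof -
  have "b - a*e > 0 \<and> 2*(b - a*e)*e = c - a*(e^2 + s/(4*(b-a*e)^2)) - \<mu>"
  proof (cases "a = 0")
    case True
    then show ?thesis using b by (simp add: e_def eff_def field_simps)
  next
    case False
    define k where "k = b^2 - a*(c-\<mu>)"
    define rr where "rr = sqrt (k^2 + a^2 * s)"
    have as: "a^2 * s > 0" using s False by simp
    have "rr > sqrt (k^2)" unfolding rr_def using as by (simp del: real_sqrt_abs)
    then have rk: "rr > \<bar>k\<bar>" by simp
    define w where "w = (k + rr)/2"
    have w: "w > 0" using rk w_def by simp
    define u where "u = sqrt w"
    have u: "u > 0" using w u_def by simp
    have uw: "u^2 = w" using w u_def by simp
    have r2: "rr^2 = k^2 + a^2 * s" unfolding rr_def using as
      by (simp add: add_nonneg_nonneg)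
    have ae: "a*e = b - u" using False unfolding e_def eff_def u_def w_def rr_def k_def by simp
    have "4*w*(k - w) = k^2 - rr^2" unfolding w_def by (simp add: field_simps power2_eq_square)
    then have wk: "4*w*(k - w) = -(a^2 * s)" using r2 by simp
    have bu: "b - a*e = u" using ae by simp
    have "a * (2*u*e) = a * (c - a*(e^2 + s/(4*u^2)) - \<mu>)"
    proof -
      have n: "-(a^2 * s) = 4*u^2*(b^2 - a*(c-\<mu>) - u^2)" using wk uw k_def by simp
      have d: "4*u^2*(a*(a*(s/(4*u^2)))) = a^2 * s" using u by (simp add: power2_eq_square)
      have "4*u^2 * (a * (2*u*e)) = 4*u^2*(2*u*(a*e))" by (simp add: algebra_simps)
      also have "\<dots> = 4*u^2*(2*u*(b-u))" using ae by simp
      also have "\<dots> = 4*u^2*(a*(c-\<mu>)) - 4*u^2*(b-u)^2 + 4*u^2*(b^2 - a*(c-\<mu>) - u^2)"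
        by (simp add: power2_eq_square algebra_simps)
      also have "\<dots> = 4*u^2*(a*(c-\<mu>)) - 4*u^2*(a*e)^2 - a^2 * s"
        using n ae by simp
      also have "\<dots> = 4*u^2*(a*(c-\<mu>)) - 4*u^2*(a*e)^2 - 4*u^2*(a*(a*(s/(4*u^2))))"
        using d by simp
      also have "\<dots> = 4*u^2 * (a * (c - a*(e^2 + s/(4*u^2)) - \<mu>))"
        by (simp add: power2_eq_square algebra_simps)
      finally have fin: "4*u^2 * (a * (2*u*e)) = 4*u^2 * (a * (c - a*(e^2 + s/(4*u^2)) - \<mu>))" .
      have nz: "4*u^2 \<noteq> 0" using u by simp
      show ?thesis using fin mult_left_cancel[OF nz] by blast
    qed
    then have "2*u*e = c - a*(e^2 + s/(4*u^2)) - \<mu>" using False by simp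
    then show ?thesis using bu u by simp
  qed
  then show "b - a*e > 0" "2*(b - a*e)*e = c - a*(e^2 + s/(4*(b-a*e)^2)) - \<mu>" by auto
qed

lemma meas_G:
  assumes "sets G = sets borel" "f \<in> borel_measurable borel"
  shows "f \<in> borel_measurable G"
  using assms measurable_cong_sets[OF assms(1) refl] by simp

lemma mv:
  assumes G: "prob_space G" "sets G = sets borel" "integrable G (\<lambda>t. t^2)"
  shows "integrable G (\<lambda>t. t)" "(\<integral>t. (p - t)^2 \<partial>G) = (p - dist_mean G)^2 + dist_var G"
proof -
  interpret prob_space G by fact
  have m: "(\<lambda>t. t) \<in> borel_measurable G" by (rule meas_G[OF G(2)]) simp
  show i: "integrable G (\<lambda>t. t)" by (rule square_integrable_imp_integrable[OF m G(3)])
  have e1: "(\<integral>t. (p - t)^2 \<partial>G) = (\<integral>t. p^2 + (-2*p) * t + 1 * t^2 \<partial>G)"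
    by (rule Bochner_Integration.integral_cong) (auto simp: power2_eq_square algebra_simps)
  have e2: "dist_var G = (\<integral>t. (dist_mean G)^2 + (-2*dist_mean G) * t + 1 * t^2 \<partial>G)"
    unfolding dist_var_def
    by (rule Bochner_Integration.integral_cong) (auto simp: power2_eq_square algebra_simps)
  have q1: "(\<integral>t. p^2 + (-2*p) * t + 1 * t^2 \<partial>G) = p^2 + (-2*p) * (\<integral>t. t \<partial>G) + 1 * (\<integral>t. t^2 \<partial>G)"
    by (rule integral_quad[OF G(1) i G(3)])
  have q2: "(\<integral>t. (dist_mean G)^2 + (-2*dist_mean G) * t + 1 * t^2 \<partial>G) = (dist_mean G)^2 + (-2*dist_mean G) * (\<integral>t. t \<partial>G) + 1 * (\<integral>t. t^2 \<partial>G)"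
    by (rule integral_quad[OF G(1) i G(3)])
  show "(\<integral>t. (p - t)^2 \<partial>G) = (p - dist_mean G)^2 + dist_var G"
    unfolding e1 e2 q1 q2 by (simp add: dist_mean_def power2_eq_square algebra_simps)
qed

lemma bne_unique:
  fixes x :: "real \<Rightarrow> real"
  assumes b: "b > 0" and G: "prob_space G" "sets G = sets borel" "integrable G (\<lambda>t. t^2)"
    and v: "dist_var G > 0" and bne: "sym_BNE a b c G x"
  shows "(\<integral>t. x t \<partial>G) = eff a b c (dist_mean G) (dist_var G)"
proof -
  interpret prob_space G by fact
  have xm: "x \<in> borel_measurable G" and x2: "integrable G (\<lambda>t. (x t)^2)"
    and ae: "AE t in G. \<forall>z. relax_payoff a b c G x t z \<le> relax_payoff a b c G x t (x t)"
    using bne unfolding sym_BNE_def by auto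
  have x1: "integrable G x" using square_integrable_imp_integrable[OF xm x2] .
  have ti: "integrable G (\<lambda>t. t)" using mv[OF G] by simp
  define m1 where "m1 = (\<integral>t. x t \<partial>G)"
  define m2 where "m2 = (\<integral>t. (x t)^2 \<partial>G)"
  define A where "A = b - a*m1"
  define C where "C = 1/2 - c*m1 + b*m2"
  have pay: "\<And>t z. relax_payoff a b c G x t z = C + z*(c - a*m2 - t) - z^2*A"
    using payoff_eq[OF G(1) x1 x2] unfolding m1_def m2_def C_def A_def by simp
  have ae2: "AE t in G. \<forall>z. C + z*(c - a*m2 - t) - z^2*A \<le> C + x t*(c - a*m2 - t) - (x t)^2*A"
    using ae by (simp add: pay)
  have ae3: "AE t in G. A \<ge> 0 \<and> (A = 0 \<longrightarrow> t = c - a*m2)"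
    using ae2
  proof eventually_elim
    case (elim t)
    define B where "B = c - a*m2 - t"
    define X where "X = x t"
    from elim have p1: "C + (X + 1)*B - (X + 1)^2*A \<le> C + X*B - X^2*A"
      and p2: "C + (X - 1)*B - (X - 1)^2*A \<le> C + X*B - X^2*A"
      unfolding B_def X_def by blast+
    have i1: "C + (X + 1)*B - (X + 1)^2*A = (C + X*B - X^2*A) + B - (2*X+1)*A"
      by (simp add: power2_eq_square algebra_simps)
    have i2: "C + (X - 1)*B - (X - 1)^2*A = (C + X*B - X^2*A) - B + (2*X-1)*A"
      by (simp add: power2_eq_square algebra_simps)
    have "B - (2*X+1)*A \<le> 0" "- B + (2*X-1)*A \<le> 0" using p1 p2 i1 i2 by linarith+
    then have "-2*A \<le> 0" by (simp add: algebra_simps)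
    moreover have "A = 0 \<longrightarrow> B = 0" using \<open>B - (2*X+1)*A \<le> 0\<close> \<open>- B + (2*X-1)*A \<le> 0\<close> by auto
    ultimately show ?case unfolding B_def by auto
  qed
  have "AE t in G. A \<ge> 0" using ae3 by eventually_elim auto
  then have A0: "A \<ge> 0" by simp
  have Apos: "A > 0"
  proof (rule ccontr)
    assume "\<not> A > 0"
    then have A00: "A = 0" using A0 by simp
    have aet: "AE t in G. t = c - a*m2" using ae3 by eventually_elim (simp add: A00)
    have "dist_mean G = (\<integral>t. c - a*m2 \<partial>G)" unfolding dist_mean_def
      by (rule integral_cong_AE) (auto intro: meas_G[OF G(2)] simp: aet)
    then have mu: "dist_mean G = c - a*m2" by (simp add: prob_space)
    have "dist_var G = (\<integral>t. 0 \<partial>G)" unfolding dist_var_def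
      by (rule integral_cong_AE) (auto intro!: meas_G[OF G(2)] simp: mu aet)
    then show False using v by simp
  qed
  have xe: "AE t in G. x t = (c - a*m2 - t)/(2*A)"
    using ae2
  proof eventually_elim
    case (elim t)
    define B where "B = c - a*m2 - t"
    define X where "X = x t"
    have id: "\<And>z. C + z*B - z^2*A = C + B^2/(4*A) - A*(z - B/(2*A))^2"
      using Apos by (simp add: field_simps power2_eq_square)
    have "C + (B/(2*A))*B - (B/(2*A))^2*A \<le> C + X*B - X^2*A"
      using elim unfolding B_def X_def by blast
    then have "A*(X - B/(2*A))^2 \<le> 0" unfolding id by simp
    then have "(X - B/(2*A))^2 \<le> 0" using Apos by (simp add: mult_le_0_iff)
    then have "X = B/(2*A)" by simp
    then show ?case unfolding X_def B_def .
  qed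
  have mmx: "(\<lambda>t. (c - a*m2 - t)/(2*A)) \<in> borel_measurable G" by (rule meas_G[OF G(2)]) simp
  have "m1 = (\<integral>t. (c - a*m2 - t)/(2*A) \<partial>G)" unfolding m1_def
    by (rule integral_cong_AE[OF xm mmx xe])
  also have "\<dots> = (c - a*m2 - dist_mean G)/(2*A)"
    using ti by (simp add: dist_mean_def prob_space)
  finally have r1: "2*A*m1 = c - a*m2 - dist_mean G" using Apos by (simp add: field_simps)
  have mmx2: "(\<lambda>t. ((c - a*m2 - t)/(2*A))^2) \<in> borel_measurable G" by (rule meas_G[OF G(2)]) simp
  have eqm: "(\<integral>t. (x t)^2 \<partial>G) = (\<integral>t. ((c - a*m2 - t)/(2*A))^2 \<partial>G)"
    by (rule integral_cong_AE) (use xm mmx2 xe in auto)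
  have "m2 = (\<integral>t. ((c - a*m2 - t)/(2*A))^2 \<partial>G)" using eqm unfolding m2_def[symmetric] .
  also have "\<dots> = (\<integral>t. (c - a*m2 - t)^2 \<partial>G) / (2*A)^2"
    by (simp add: power_divide)
  also have "\<dots> = ((c - a*m2 - dist_mean G)^2 + dist_var G) / (2*A)^2"
    using mv(2)[OF G] by simp
  finally have r2: "4*A^2*m2 = (c - a*m2 - dist_mean G)^2 + dist_var G" using Apos
    by (simp add: field_simps power2_eq_square)
  show ?thesis using eff_char[OF b v A_def Apos r1 r2] unfolding m1_def .
qed

lemma bne_exists:
  assumes b: "b > 0" and G: "prob_space G" "sets G = sets borel" "integrable G (\<lambda>t. t^2)"
    and v: "dist_var G > 0"
  shows "\<exists>x. sym_BNE a b c G x \<and> eff a b c (dist_mean G) (dist_var G) = (\<integral>t. x t \<partial>G)"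
proof -
  interpret prob_space G by fact
  define \<mu> where "\<mu> = dist_mean G"
  define s where "s = dist_var G"
  define e where "e = eff a b c \<mu> s"
  define u where "u = b - a*e"
  have u: "u > 0" using eff_props(1)[OF b v] unfolding u_def e_def \<mu>_def s_def .
  define m2 where "m2 = e^2 + s/(4*u^2)"
  have eq: "2*u*e = c - a*m2 - \<mu>" using eff_props(2)[OF b v] unfolding u_def e_def \<mu>_def s_def m2_def .
  define p where "p = c - a*m2"
  define x where "x = (\<lambda>t. (p - t)/(2*u))"
  have ti: "integrable G (\<lambda>t. t)" using mv[OF G] by simp
  have xm: "x \<in> borel_measurable G" unfolding x_def by (rule meas_G[OF G(2)]) simp
  have x1: "integrable G x" unfolding x_def using ti by simp
  have xx: "(\<lambda>t. (x t)^2) = (\<lambda>t. (p^2/(4*u^2)) + (-2*p/(4*u^2)) * t + (1/(4*u^2)) * t^2)"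
    unfolding x_def using u by (auto simp: field_simps power2_eq_square)
  have x2: "integrable G (\<lambda>t. (x t)^2)" unfolding xx using ti G(3) by simp
  have ix: "(\<integral>t. x t \<partial>G) = e"
  proof -
    have "(\<integral>t. x t \<partial>G) = (p - \<mu>)/(2*u)" unfolding x_def \<mu>_def dist_mean_def using ti
      by (simp add: prob_space)
    also have "\<dots> = e" using eq u unfolding p_def by (simp add: field_simps)
    finally show ?thesis .
  qed
  have ix2: "(\<integral>t. (x t)^2 \<partial>G) = m2"
  proof -
    have "(\<integral>t. (x t)^2 \<partial>G) = (\<integral>t. (p - t)^2 \<partial>G) / (4*u^2)"
      unfolding x_def by (simp add: power_divide power_mult_distrib)
    also have "\<dots> = ((p - \<mu>)^2 + s)/(4*u^2)" using mv(2)[OF G] unfolding \<mu>_def s_def by simp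
    also have "\<dots> = ((2*u*e)^2 + s)/(4*u^2)" using eq unfolding p_def by simp
    also have "\<dots> = m2" unfolding m2_def using u by (simp add: field_simps power2_eq_square)
    finally show ?thesis .
  qed
  have opt: "\<forall>t z. relax_payoff a b c G x t z \<le> relax_payoff a b c G x t (x t)"
  proof (intro allI)
    fix t z
    define C where "C = 1/2 - c*e + b*m2"
    define B where "B = p - t"
    have pay: "relax_payoff a b c G x t z' = C + z'*B - z'^2*u" for z'
    proof -
      have "relax_payoff a b c G x t z' = 1/2 - c*e + b*m2 + z'*(c - a*m2 - t) - z'^2*(b - a*e)"
        using payoff_eq[OF G(1) x1 x2, of a b c t z'] unfolding ix ix2 .
      then show ?thesis unfolding C_def B_def p_def u_def by (simp add: algebra_simps)
    qed
    have xt: "B = 2*u*x t" unfolding x_def B_def using u by simp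
    have "(C + x t*B - (x t)^2*u) - (C + z*B - z^2*u) = u*(z - x t)^2"
      unfolding xt by (simp add: power2_eq_square algebra_simps)
    moreover have "u*(z - x t)^2 \<ge> 0" using u by simp
    ultimately show "relax_payoff a b c G x t z \<le> relax_payoff a b c G x t (x t)"
      unfolding pay by linarith
  qed
  have "sym_BNE a b c G x" unfolding sym_BNE_def using xm x2 opt by simp
  then show ?thesis using ix unfolding e_def \<mu>_def s_def by (intro exI[of _ x]) simp
qed

lemma eq_effort_eq:
  assumes b: "b > 0" and G: "prob_space G" "sets G = sets borel" "integrable G (\<lambda>t. t^2)"
    and v: "dist_var G > 0"
  shows "eq_effort a b c G = eff a b c (dist_mean G) (dist_var G)"
  unfolding eq_effort_def
proof (rule the_equality)
  show "\<exists>x. sym_BNE a b c G x \<and> eff a b c (dist_mean G) (dist_var G) = (\<integral>t. x t \<partial>G)"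
    by (rule bne_exists[OF assms])
  fix e assume "\<exists>x. sym_BNE a b c G x \<and> e = (\<integral>t. x t \<partial>G)"
  then show "e = eff a b c (dist_mean G) (dist_var G)" using bne_unique[OF assms] by blast
qed

lemma eff_cont:
  assumes "v \<longlonglongrightarrow> 0"
  shows "(\<lambda>n. eff a b c \<mu> (v n)) \<longlonglongrightarrow> eff a b c \<mu> 0"
proof (cases "a = 0")
  case True then show ?thesis by (simp add: eff_def)
next
  case False
  show ?thesis unfolding eff_def using False
    by (auto intro!: tendsto_eq_intros assms)
qed

definition twopt :: "real \<Rightarrow> real \<Rightarrow> real measure" where
  "twopt \<mu> d = distr (measure_pmf (pmf_of_set {\<mu> - d, \<mu> + d})) borel (\<lambda>t. t)"

lemma twopt:
  assumes d: "d > 0"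
  shows "prob_space (twopt \<mu> d)" "sets (twopt \<mu> d) = sets borel"
    "integrable (twopt \<mu> d) (\<lambda>t. t^2)" "dist_mean (twopt \<mu> d) = \<mu>" "dist_var (twopt \<mu> d) = d^2"
proof -
  define S where "S = {\<mu> - d, \<mu> + d}"
  have S: "finite S" "S \<noteq> {}" unfolding S_def by auto
  have ne: "\<mu> - d \<noteq> \<mu> + d" using d by simp
  have cS: "card S = 2" unfolding S_def using d by simp
  show "prob_space (twopt \<mu> d)" unfolding twopt_def
    by (rule measure_pmf.prob_space_distr) simp
  show "sets (twopt \<mu> d) = sets borel" unfolding twopt_def by simp
  show "integrable (twopt \<mu> d) (\<lambda>t. t^2)" unfolding twopt_def
    by (subst integrable_distr_eq) (auto intro!: integrable_measure_pmf_finite simp: S_def[symmetric] S)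
  have m: "dist_mean (twopt \<mu> d) = \<mu>" unfolding twopt_def dist_mean_def
    by (subst integral_distr) (auto simp: S_def[symmetric] integral_pmf_of_set[OF S(2) S(1)] cS, simp add: S_def ne power2_eq_square)
  then show "dist_mean (twopt \<mu> d) = \<mu>" .
  show "dist_var (twopt \<mu> d) = d^2" unfolding dist_var_def m unfolding twopt_def
    by (subst integral_distr) (auto simp: S_def[symmetric] integral_pmf_of_set[OF S(2) S(1)] cS, simp add: S_def ne power2_eq_square)
qed

lemma limit_eq:
  assumes b: "b > 0"
  shows "limit_effort a b c \<mu> = eff a b c \<mu> 0"
  unfolding limit_effort_def
proof (rule the_equality)
  show "\<forall>Gs :: nat \<Rightarrow> real measure.
     ((\<forall>n. prob_space (Gs n) \<and> sets (Gs n) = sets borel \<and> integrable (Gs n) (\<lambda>t. t^2) \<and>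
           dist_mean (Gs n) = \<mu> \<and> dist_var (Gs n) > 0) \<and>
      (\<lambda>n. dist_var (Gs n)) \<longlonglongrightarrow> 0)
     \<longrightarrow> (\<lambda>n. eq_effort a b c (Gs n)) \<longlonglongrightarrow> eff a b c \<mu> 0"
  proof (intro allI impI)
    fix Gs :: "nat \<Rightarrow> real measure"
    assume H: "(\<forall>n. prob_space (Gs n) \<and> sets (Gs n) = sets borel \<and> integrable (Gs n) (\<lambda>t. t^2) \<and>
           dist_mean (Gs n) = \<mu> \<and> dist_var (Gs n) > 0) \<and>
      (\<lambda>n. dist_var (Gs n)) \<longlonglongrightarrow> 0"
    have "\<And>n. eq_effort a b c (Gs n) = eff a b c \<mu> (dist_var (Gs n))"
      using H eq_effort_eq[OF b] by metis
    then show "(\<lambda>n. eq_effort a b c (Gs n)) \<longlonglongrightarrow> eff a b c \<mu> 0"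
      using eff_cont[of "\<lambda>n. dist_var (Gs n)"] H by simp
  qed
  fix L
  assume H: "\<forall>Gs :: nat \<Rightarrow> real measure.
     ((\<forall>n. prob_space (Gs n) \<and> sets (Gs n) = sets borel \<and> integrable (Gs n) (\<lambda>t. t^2) \<and>
           dist_mean (Gs n) = \<mu> \<and> dist_var (Gs n) > 0) \<and>
      (\<lambda>n. dist_var (Gs n)) \<longlonglongrightarrow> 0)
     \<longrightarrow> (\<lambda>n. eq_effort a b c (Gs n)) \<longlonglongrightarrow> L"
  define Gs where "Gs = (\<lambda>n::nat. twopt \<mu> (1 / Suc n))"
  have pos: "\<And>n::nat. (1::real) / Suc n > 0" by simp
  have c1: "\<forall>n. prob_space (Gs n) \<and> sets (Gs n) = sets borel \<and> integrable (Gs n) (\<lambda>t. t^2) \<and>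
           dist_mean (Gs n) = \<mu> \<and> dist_var (Gs n) > 0"
    unfolding Gs_def using twopt[OF pos] by simp
  have "(\<lambda>n. (inverse (real (Suc n)))^2) \<longlonglongrightarrow> 0^2"
    by (intro tendsto_power LIMSEQ_inverse_real_of_nat)
  then have "(\<lambda>n. (1 / real (Suc n))^2) \<longlonglongrightarrow> 0" by (simp add: inverse_eq_divide)
  then have c2: "(\<lambda>n. dist_var (Gs n)) \<longlonglongrightarrow> 0"
    unfolding Gs_def using twopt(5)[OF pos] by simp
  have l1: "(\<lambda>n. eq_effort a b c (Gs n)) \<longlonglongrightarrow> L" using H c1 c2 by blast
  have "\<And>n. eq_effort a b c (Gs n) = eff a b c \<mu> (dist_var (Gs n))"
    using c1 eq_effort_eq[OF b] by metis
  then have l2: "(\<lambda>n. eq_effort a b c (Gs n)) \<longlonglongrightarrow> eff a b c \<mu> 0"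
    using eff_cont[OF c2] by simp
  show "L = eff a b c \<mu> 0" using LIMSEQ_unique[OF l1 l2] .
qed

lemma benchmark_eq:
  assumes b: "b > 0" and G: "prob_space G" "sets G = sets borel" "integrable G (\<lambda>t. t^2)"
  shows "benchmark_effort a b c G = eff a b c (dist_mean G) (dist_var G)"
proof (cases "dist_var G > 0")
  case True
  then show ?thesis unfolding benchmark_effort_def using eq_effort_eq[OF assms True] by simp
next
  case False
  have "dist_var G \<ge> 0" unfolding dist_var_def by simp
  then have "dist_var G = 0" using False by simp
  then show ?thesis unfolding benchmark_effort_def using limit_eq[OF b] False by simp
qed

definition clip :: "real \<Rightarrow> real \<Rightarrow> real \<Rightarrow> real" where
  "clip \<alpha> \<beta> t = max \<alpha> (min \<beta> t)"

lemma clip_in: "\<alpha> \<le> \<beta> \<Longrightarrow> clip \<alpha> \<beta> t \<in> {\<alpha>..\<beta>}" unfolding clip_def by auto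
lemma clip_id: "t \<in> {\<alpha>..\<beta>} \<Longrightarrow> clip \<alpha> \<beta> t = t" unfolding clip_def by auto
lemma clip_meas[measurable]: "clip \<alpha> \<beta> \<in> borel_measurable borel" unfolding clip_def by simp

lemma in_bd: "(x::real) \<in> {\<alpha>..\<beta>} \<Longrightarrow> \<bar>x\<bar> \<le> \<bar>\<alpha>\<bar> + \<bar>\<beta>\<bar>" by auto

lemma abs_mult_bd: "\<bar>u::real\<bar> \<le> A \<Longrightarrow> \<bar>v\<bar> \<le> B \<Longrightarrow> \<bar>u * v\<bar> \<le> A * B"
  by (simp add: abs_mult mult_mono')

lemma abs_diff_bd: "\<bar>u::real\<bar> \<le> A \<Longrightarrow> \<bar>v\<bar> \<le> B \<Longrightarrow> \<bar>u - v\<bar> \<le> A + B" by linarith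

lemma abs_sq_bd: "\<bar>u::real\<bar> \<le> A \<Longrightarrow> \<bar>u^2\<bar> \<le> A * A"
  using abs_mult_bd[of u A u A] by (simp add: power2_eq_square)

locale jsetup =
  fixes F :: "real measure" and Sg :: "'b measure" and K :: "real \<Rightarrow> 'b measure" and \<alpha> \<beta> :: real
  assumes F: "prob_space F" and sF: "sets F = sets borel" and K: "K \<in> borel \<rightarrow>\<^sub>M prob_algebra Sg"
    and aeF: "AE \<theta> in F. \<theta> \<in> {\<alpha>..\<beta>}" and ab: "\<alpha> \<le> \<beta>"
begin

abbreviation "J \<equiv> joint F Sg K"
abbreviation "Nk \<equiv> (\<lambda>\<theta>. distr (K \<theta>) (borel \<Otimes>\<^sub>M Sg) (\<lambda>s. (\<theta>, s)))"
abbreviation "post \<equiv> post_mean F Sg K"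
abbreviation "Sub \<equiv> vimage_algebra (space J) snd Sg"
abbreviation "R \<equiv> \<bar>\<alpha>\<bar> + \<bar>\<beta>\<bar>"

lemma KF: "K \<in> F \<rightarrow>\<^sub>M prob_algebra Sg"
  by (subst measurable_cong_sets[OF sF refl]) (rule K)

lemma Kth: "prob_space (K \<theta>)" "sets (K \<theta>) = sets Sg" "space (K \<theta>) = space Sg"
proof -
  have "K \<theta> \<in> space (prob_algebra Sg)" using measurable_space[OF K, of \<theta>] by simp
  then show "prob_space (K \<theta>)" and s: "sets (K \<theta>) = sets Sg" by (auto simp: space_prob_algebra)
  show "space (K \<theta>) = space Sg" by (rule sets_eq_imp_space_eq[OF s])
qed

lemma spSg: "space Sg \<noteq> {}"
  using prob_space.not_empty[OF Kth(1)] Kth(3) by simp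

lemma Nmeas: "Nk \<in> F \<rightarrow>\<^sub>M prob_algebra (borel \<Otimes>\<^sub>M Sg)"
proof (rule measurable_distr_prob_space2[OF KF])
  have "(\<lambda>(x, y). (x, y)) \<in> borel \<Otimes>\<^sub>M Sg \<rightarrow>\<^sub>M borel \<Otimes>\<^sub>M Sg" by simp
  then show "(\<lambda>(x, y). (x, y)) \<in> F \<Otimes>\<^sub>M Sg \<rightarrow>\<^sub>M borel \<Otimes>\<^sub>M Sg"
    by (subst measurable_cong_sets[OF sets_pair_measure_cong[OF sF refl] refl]) (rule \<open>_ \<in> borel \<Otimes>\<^sub>M Sg \<rightarrow>\<^sub>M borel \<Otimes>\<^sub>M Sg\<close>)
qed

lemma FinSp: "F \<in> space (prob_algebra F)" using F by (simp add: space_prob_algebra)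

lemma sJ: "sets J = sets (borel \<Otimes>\<^sub>M Sg)"
  unfolding joint_def by (rule sets_bind'[OF FinSp Nmeas])

lemma spJ: "space J = UNIV \<times> space Sg"
  using sets_eq_imp_space_eq[OF sJ] by (simp add: space_pair_measure)

lemma pJ: "prob_space J"
  unfolding joint_def by (rule prob_space_bind'[OF FinSp Nmeas])

lemma measJ: "f \<in> borel_measurable (borel \<Otimes>\<^sub>M Sg) \<Longrightarrow> f \<in> borel_measurable J"
  by (subst measurable_cong_sets[OF sJ refl])

lemma J_int:
  fixes \<phi> :: "real \<times> 'b \<Rightarrow> real"
  assumes m: "\<phi> \<in> borel_measurable (borel \<Otimes>\<^sub>M Sg)" and bd: "\<And>z. z \<in> space (borel \<Otimes>\<^sub>M Sg) \<Longrightarrow> \<bar>\<phi> z\<bar> \<le> B"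
  shows "(\<integral>z. \<phi> z \<partial>J) = (\<integral>\<theta>. (\<integral>s. \<phi> (\<theta>, s) \<partial>K \<theta>) \<partial>F)"
proof -
  have N: "Nk \<in> F \<rightarrow>\<^sub>M subprob_algebra (borel \<Otimes>\<^sub>M Sg)" using measurable_prob_algebraD[OF Nmeas] .
  have fin: "finite_measure F" using F unfolding prob_space_def by simp
  have Nae: "AE \<theta> in F. emeasure (Nk \<theta>) (space (Nk \<theta>)) \<le> ennreal 1"
  proof (rule AE_I2)
    fix \<theta> assume "\<theta> \<in> space F"
    interpret prob_space "K \<theta>" by (rule Kth)
    have "prob_space (Nk \<theta>)" by (rule prob_space_distr) (simp add: measurable_cong_sets[OF Kth(2) refl])
    then have "emeasure (Nk \<theta>) (space (Nk \<theta>)) = 1" by (rule prob_space.emeasure_space_1)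
    then show "emeasure (Nk \<theta>) (space (Nk \<theta>)) \<le> ennreal 1" by simp
  qed
  have "(\<integral>z. \<phi> z \<partial>J) = (\<integral>\<theta>. (\<integral>z. \<phi> z \<partial>Nk \<theta>) \<partial>F)"
    unfolding joint_def using integral_bind[OF m bd N fin Nae] by simp
  also have "\<dots> = (\<integral>\<theta>. (\<integral>s. \<phi> (\<theta>, s) \<partial>K \<theta>) \<partial>F)"
  proof (rule Bochner_Integration.integral_cong[OF refl])
    fix \<theta>
    have "Pair \<theta> \<in> K \<theta> \<rightarrow>\<^sub>M borel \<Otimes>\<^sub>M Sg"
      by (subst measurable_cong_sets[OF Kth(2) refl]) (rule measurable_Pair1', simp)
    then show "(\<integral>z. \<phi> z \<partial>Nk \<theta>) = (\<integral>s. \<phi> (\<theta>, s) \<partial>K \<theta>)"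
      by (subst integral_distr) (auto simp: m)
  qed
  finally show ?thesis .
qed

lemma AE_fst: "AE z in J. fst z \<in> {\<alpha>..\<beta>}"
proof -
  have N: "Nk \<in> F \<rightarrow>\<^sub>M subprob_algebra (borel \<Otimes>\<^sub>M Sg)" using measurable_prob_algebraD[OF Nmeas] .
  have P: "Measurable.pred (borel \<Otimes>\<^sub>M Sg) (\<lambda>z. fst z \<in> {\<alpha>..\<beta>})" by measurable
  have "AE \<theta> in F. AE z in Nk \<theta>. fst z \<in> {\<alpha>..\<beta>}"
    using aeF
  proof eventually_elim
    case (elim \<theta>)
    have "Pair \<theta> \<in> K \<theta> \<rightarrow>\<^sub>M borel \<Otimes>\<^sub>M Sg"
      by (subst measurable_cong_sets[OF Kth(2) refl]) (rule measurable_Pair1', simp)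
    then show ?case using elim by (subst AE_distr_iff) (auto simp: P)
  qed
  then show ?thesis unfolding joint_def using AE_bind[OF N P] by simp
qed

end

context jsetup begin

lemma sndm: "snd \<in> J \<rightarrow>\<^sub>M Sg"
  by (subst measurable_cong_sets[OF sJ refl]) (rule measurable_snd)

lemma fstm: "fst \<in> borel_measurable J"
  by (subst measurable_cong_sets[OF sJ refl]) (rule measurable_fst)

lemma snd_sp: "snd \<in> space J \<rightarrow> space Sg" unfolding spJ by (simp add: Pi_iff)

lemma subalg: "subalgebra J Sub"
  unfolding subalgebra_def
proof
  show "space Sub = space J" by simp
  show "sets Sub \<subseteq> sets J"
  proof
    fix X assume "X \<in> sets Sub"
    then obtain A where "A \<in> sets Sg" "X = snd -` A \<inter> space J"
      unfolding sets_vimage_algebra2[OF snd_sp] by blast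
    then show "X \<in> sets J" using measurable_sets[OF sndm \<open>A \<in> sets Sg\<close>] by simp
  qed
qed

lemma finJ: "finite_measure J" using pJ unfolding prob_space_def by (rule conjunct1)

lemma sfs: "sigma_finite_subalgebra J Sub"
proof (rule finite_measure_subalgebra_is_sigma_finite)
  show "finite_measure_subalgebra J Sub"
    unfolding finite_measure_subalgebra_def finite_measure_subalgebra_axioms_def
    using finJ subalg by (rule conjI)
qed

lemma bint:
  fixes g :: "real \<times> 'b \<Rightarrow> real"
  assumes "g \<in> borel_measurable J" "AE z in J. \<bar>g z\<bar> \<le> B"
  shows "integrable J g"
proof -
  have "AE z in J. norm (g z) \<le> B" using assms(2) unfolding real_norm_def .
  then show ?thesis by (rule finite_measure.integrable_const_bound[OF finJ _ assms(1)])
qed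

lemma fint: "integrable J fst"
  by (rule bint[OF fstm, of R]) (rule AE_mp[OF AE_fst], simp add: in_bd)

lemma post_eq: "post = real_cond_exp J Sub fst"
  unfolding post_mean_def ..

lemma postS: "post \<in> borel_measurable Sub" unfolding post_eq by simp
lemma postJ: "post \<in> borel_measurable J" unfolding post_eq by simp

lemma post_bd: "AE z in J. post z \<in> {\<alpha>..\<beta>}"
proof -
  have "AE z in J. \<alpha> \<le> fst z" "AE z in J. fst z \<le> \<beta>" using AE_fst by auto
  then have "AE z in J. post z \<ge> \<alpha>" "AE z in J. post z \<le> \<beta>" unfolding post_eq
    using sigma_finite_subalgebra.real_cond_exp_ge_c[OF sfs fint]
          sigma_finite_subalgebra.real_cond_exp_le_c[OF sfs fint] by auto
  then show ?thesis by auto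
qed

lemma post_int: "(\<integral>z. post z \<partial>J) = (\<integral>z. fst z \<partial>J)"
  unfolding post_eq using sigma_finite_subalgebra.real_cond_exp_int(2)[OF sfs fint] .

lemma int_fst_gen:
  fixes q :: "real \<Rightarrow> real"
  assumes qm: "q \<in> borel_measurable borel" and qb: "\<And>t. t \<in> {\<alpha>..\<beta>} \<Longrightarrow> \<bar>q t\<bar> \<le> B"
  shows "(\<integral>z. q (fst z) \<partial>J) = (\<integral>\<theta>. q \<theta> \<partial>F)"
proof -
  have m1: "(\<lambda>z. q (fst z)) \<in> borel_measurable J" using measurable_comp[OF fstm qm] by (simp add: comp_def)
  have m2: "(\<lambda>z. q (clip \<alpha> \<beta> (fst z))) \<in> borel_measurable J"
    using measurable_comp[OF fstm measurable_comp[OF clip_meas qm]] by (simp add: comp_def)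
  have ae1: "AE z in J. q (fst z) = q (clip \<alpha> \<beta> (fst z))"
    using AE_fst by eventually_elim (simp add: clip_id)
  have "(\<integral>z. q (fst z) \<partial>J) = (\<integral>z. q (clip \<alpha> \<beta> (fst z)) \<partial>J)"
    by (rule integral_cong_AE[OF m1 m2 ae1])
  also have "\<dots> = (\<integral>\<theta>. (\<integral>s. (\<lambda>z. q (clip \<alpha> \<beta> (fst z))) (\<theta>, s) \<partial>K \<theta>) \<partial>F)"
  proof (rule J_int[of _ B])
    show "(\<lambda>z. q (clip \<alpha> \<beta> (fst z))) \<in> borel_measurable (borel \<Otimes>\<^sub>M Sg)"
      using measurable_comp[OF measurable_fst measurable_comp[OF clip_meas qm]] by (simp add: comp_def)
    show "\<bar>q (clip \<alpha> \<beta> (fst z))\<bar> \<le> B" for z using qb[OF clip_in[OF ab]] .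
  qed
  also have "\<dots> = (\<integral>\<theta>. q (clip \<alpha> \<beta> \<theta>) \<partial>F)"
    using Kth(1) by (simp add: prob_space.prob_space)
  also have "\<dots> = (\<integral>\<theta>. q \<theta> \<partial>F)"
  proof (rule integral_cong_AE)
    show "(\<lambda>\<theta>. q (clip \<alpha> \<beta> \<theta>)) \<in> borel_measurable F"
      using measurable_comp[OF clip_meas qm] by (intro meas_G[OF sF]) (simp add: comp_def)
    show "q \<in> borel_measurable F" by (rule meas_G[OF sF qm])
    show "AE \<theta> in F. q (clip \<alpha> \<beta> \<theta>) = q \<theta>" using aeF by eventually_elim (simp add: clip_id)
  qed
  finally show ?thesis .
qed

lemma int_fst: "(\<integral>z. fst z \<partial>J) = (\<integral>\<theta>. \<theta> \<partial>F)"
proof (rule int_fst_gen[of "\<lambda>t. t" R])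
  show "\<bar>t\<bar> \<le> R" if "t \<in> {\<alpha>..\<beta>}" for t by (rule in_bd[OF that])
qed simp

lemma int_fst2: "(\<integral>z. (fst z)^2 \<partial>J) = (\<integral>\<theta>. \<theta>^2 \<partial>F)"
proof (rule int_fst_gen[of "\<lambda>t. t^2" "R*R"])
  show "\<bar>t^2\<bar> \<le> R*R" if "t \<in> {\<alpha>..\<beta>}" for t by (rule abs_sq_bd[OF in_bd[OF that]])
qed simp

end

context jsetup begin

lemma spJ_mem: "z \<in> space J \<Longrightarrow> snd z \<in> space Sg" unfolding spJ by (simp add: mem_Times_iff)

lemma factor: "\<exists>h. h \<in> borel_measurable Sg \<and> (\<forall>s\<in>space Sg. h s \<in> {\<alpha>..\<beta>}) \<and> (AE z in J. post z = h (snd z))"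
proof -
  define h0 where "h0 = (\<lambda>s. post (0::real, s))"
  have g: "(\<lambda>s. (0::real, s)) \<in> Sg \<rightarrow>\<^sub>M Sub"
  proof (rule measurable_vimage_algebra2)
    show "(\<lambda>s. (0::real, s)) \<in> space Sg \<rightarrow> space J" unfolding spJ by auto
    show "(\<lambda>x. snd (0::real, x)) \<in> Sg \<rightarrow>\<^sub>M Sg" by (simp only: snd_conv) (rule measurable_ident_sets, rule refl)
  qed
  have h0m: "h0 \<in> borel_measurable Sg" unfolding h0_def using measurable_comp[OF g postS] by (simp only: comp_def)
  have pw: "post z = h0 (snd z)" if z: "z \<in> space J" for z
  proof -
    obtain \<theta> s where zs: "z = (\<theta>, s)" by (cases z)
    have s: "s \<in> space Sg" using spJ_mem[OF z] zs by simp
    have "post -` {post z} \<inter> space Sub \<in> sets Sub" by (rule measurable_sets[OF postS]) simp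
    then obtain A where A: "A \<in> sets Sg" "post -` {post z} \<inter> space J = snd -` A \<inter> space J"
      unfolding sets_vimage_algebra2[OF snd_sp] space_vimage_algebra by blast
    have "z \<in> snd -` A \<inter> space J" using A(2) z by blast
    then have "s \<in> A" using zs by simp
    moreover have "(0::real, s) \<in> space J" using s unfolding spJ by simp
    ultimately have "(0::real, s) \<in> post -` {post z} \<inter> space J" using A(2) by simp
    then show ?thesis unfolding h0_def using zs by simp
  qed
  define h where "h = (\<lambda>s. clip \<alpha> \<beta> (h0 s))"
  have hm: "h \<in> borel_measurable Sg" unfolding h_def using measurable_comp[OF h0m clip_meas] by (simp only: comp_def)
  have hb: "\<forall>s\<in>space Sg. h s \<in> {\<alpha>..\<beta>}" unfolding h_def using clip_in[OF ab] by blast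
  have "AE z in J. post z = h (snd z)"
    using post_bd AE_space
  proof eventually_elim
    case (elim z)
    then show ?case unfolding h_def using pw[of z] clip_id[of "post z" \<alpha> \<beta>] by simp
  qed
  then show ?thesis using hm hb by blast
qed

lemma bint3:
  fixes u v w :: "real \<times> 'b \<Rightarrow> real"
  assumes m: "u \<in> borel_measurable J" "v \<in> borel_measurable J" "w \<in> borel_measurable J"
    and ae: "AE z in J. u z \<in> {\<alpha>..\<beta>}" "AE z in J. v z \<in> {\<alpha>..\<beta>}" "AE z in J. w z \<in> {\<alpha>..\<beta>}"
  shows "integrable J (\<lambda>z. (u z - v z)^2)" "integrable J (\<lambda>z. (u z - v z) * w z)"
    "integrable J (\<lambda>z. u z * w z)"
proof -
  have b: "AE z in J. \<bar>u z\<bar> \<le> R \<and> \<bar>v z\<bar> \<le> R \<and> \<bar>w z\<bar> \<le> R"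
    using ae by eventually_elim (blast intro: in_bd)
  show "integrable J (\<lambda>z. (u z - v z)^2)"
  proof (rule bint)
    show "(\<lambda>z. (u z - v z)^2) \<in> borel_measurable J" using m by measurable
    show "AE z in J. \<bar>(u z - v z)^2\<bar> \<le> (R+R)*(R+R)"
      using b by eventually_elim (blast intro: abs_sq_bd abs_diff_bd)
  qed
  show "integrable J (\<lambda>z. (u z - v z) * w z)"
  proof (rule bint)
    show "(\<lambda>z. (u z - v z) * w z) \<in> borel_measurable J" using m by measurable
    show "AE z in J. \<bar>(u z - v z) * w z\<bar> \<le> (R+R)*R"
      using b by eventually_elim (blast intro: abs_mult_bd abs_diff_bd)
  qed
  show "integrable J (\<lambda>z. u z * w z)"
  proof (rule bint)
    show "(\<lambda>z. u z * w z) \<in> borel_measurable J" using m by measurable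
    show "AE z in J. \<bar>u z * w z\<bar> \<le> R*R"
      using b by eventually_elim (blast intro: abs_mult_bd)
  qed
qed

lemma ce:
  assumes "D \<in> borel_measurable Sub" "integrable J (\<lambda>z. D z * fst z)"
  shows "(\<integral>z. D z * post z \<partial>J) = (\<integral>z. D z * fst z \<partial>J)"
  unfolding post_eq by (rule sigma_finite_subalgebra.real_cond_exp_intg(2)[OF sfs assms(2) assms(1) fstm])

lemma opt:
  fixes f :: "'b \<Rightarrow> real"
  assumes fm: "f \<in> borel_measurable Sg" and fb: "\<forall>s\<in>space Sg. f s \<in> {\<alpha>..\<beta>}"
  shows "(\<integral>z. (fst z - post z)^2 \<partial>J) \<le> (\<integral>z. (fst z - f (snd z))^2 \<partial>J)"
proof -
  define \<phi> :: "real \<times> 'b \<Rightarrow> real" where "\<phi> = (\<lambda>z. f (snd z))"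
  have \<phi>S: "\<phi> \<in> borel_measurable Sub" unfolding \<phi>_def
    using measurable_comp[OF measurable_vimage_algebra1[OF snd_sp] fm] by (simp only: comp_def)
  have \<phi>J: "\<phi> \<in> borel_measurable J" unfolding \<phi>_def
    using measurable_comp[OF sndm fm] by (simp only: comp_def)
  have ae\<phi>: "AE z in J. \<phi> z \<in> {\<alpha>..\<beta>}"
    by (rule AE_I2) (use fb spJ_mem in \<open>auto simp: \<phi>_def\<close>)
  note i = bint3[OF fstm postJ \<phi>J AE_fst post_bd ae\<phi>]
  note i' = bint3[OF postJ \<phi>J fstm post_bd ae\<phi> AE_fst]
  note i'' = bint3[OF postJ \<phi>J postJ post_bd ae\<phi> post_bd]
  note i3 = bint3[OF fstm \<phi>J fstm AE_fst ae\<phi> AE_fst]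
  have DS: "(\<lambda>z. post z - \<phi> z) \<in> borel_measurable Sub" using postS \<phi>S by measurable
  have c: "(\<integral>z. (post z - \<phi> z) * post z \<partial>J) = (\<integral>z. (post z - \<phi> z) * fst z \<partial>J)"
    by (rule ce[OF DS i'(2)])
  have e: "(\<lambda>z. (fst z - \<phi> z)^2) = (\<lambda>z. ((fst z - post z)^2 + (post z - \<phi> z)^2) + (2*((post z - \<phi> z) * fst z) - 2*((post z - \<phi> z) * post z)))"
    by (rule ext) (simp add: power2_eq_square algebra_simps)
  have "(\<integral>z. (fst z - \<phi> z)^2 \<partial>J) = ((\<integral>z. (fst z - post z)^2 \<partial>J) + (\<integral>z. (post z - \<phi> z)^2 \<partial>J))
      + (2*(\<integral>z. (post z - \<phi> z) * fst z \<partial>J) - 2*(\<integral>z. (post z - \<phi> z) * post z \<partial>J))"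
    unfolding e
    using i(1) i'(1) i'(2) i''(2)
    by (simp add: Bochner_Integration.integral_add Bochner_Integration.integral_diff)
  also have "\<dots> = (\<integral>z. (fst z - post z)^2 \<partial>J) + (\<integral>z. (post z - \<phi> z)^2 \<partial>J)" using c by simp
  also have "\<dots> \<ge> (\<integral>z. (fst z - post z)^2 \<partial>J)" by simp
  finally show ?thesis unfolding \<phi>_def by simp
qed

end

context jsetup begin

lemma ipost: "integrable J post"
proof (rule bint[OF postJ, of R])
  show "AE z in J. \<bar>post z\<bar> \<le> R" using post_bd by eventually_elim (rule in_bd)
qed

lemma ipost2: "integrable J (\<lambda>z. (post z)^2)"
proof (rule bint[of _ "R*R"])
  show "(\<lambda>z. (post z)^2) \<in> borel_measurable J" using postJ by measurable
  show "AE z in J. \<bar>(post z)^2\<bar> \<le> R*R" using post_bd by eventually_elim (rule abs_sq_bd[OF in_bd])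
qed

lemma ifst2: "integrable J (\<lambda>z. (fst z)^2)"
proof (rule bint[of _ "R*R"])
  show "(\<lambda>z. (fst z)^2) \<in> borel_measurable J" using fstm by measurable
  show "AE z in J. \<bar>(fst z)^2\<bar> \<le> R*R" using AE_fst by eventually_elim (rule abs_sq_bd[OF in_bd])
qed

lemma ipf: "integrable J (\<lambda>z. post z * fst z)"
  by (rule bint3(3)[OF postJ fstm fstm post_bd AE_fst AE_fst])

lemma pd_good: "prob_space (post_dist F Sg K)" "sets (post_dist F Sg K) = sets borel"
  "integrable (post_dist F Sg K) (\<lambda>t. t^2)"
proof -
  show "prob_space (post_dist F Sg K)" unfolding post_dist_def
    by (rule prob_space.prob_space_distr[OF pJ postJ])
  show "sets (post_dist F Sg K) = sets borel" unfolding post_dist_def by (rule sets_distr)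
  show "integrable (post_dist F Sg K) (\<lambda>t. t^2)" unfolding post_dist_def
    by (subst integrable_distr_eq[OF postJ]) (simp_all add: ipost2)
qed

lemma pd_int:
  fixes g :: "real \<Rightarrow> real"
  assumes "g \<in> borel_measurable borel"
  shows "(\<integral>t. g t \<partial>post_dist F Sg K) = (\<integral>z. g (post z) \<partial>J)"
  unfolding post_dist_def by (rule integral_distr[OF postJ assms])

lemma pd_mean: "dist_mean (post_dist F Sg K) = (\<integral>\<theta>. \<theta> \<partial>F)"
  unfolding dist_mean_def using pd_int[of "\<lambda>t. t"] post_int int_fst by simp

definition "Rres = (\<integral>z. (fst z - post z)^2 \<partial>J)"

lemma pd_var: "dist_var (post_dist F Sg K) = (\<integral>\<theta>. \<theta>^2 \<partial>F) - (\<integral>\<theta>. \<theta> \<partial>F)^2 - Rres"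
proof -
  define M where "M = (\<integral>\<theta>. \<theta> \<partial>F)"
  have pm: "(\<integral>z. post z \<partial>J) = M" unfolding M_def using post_int int_fst by simp
  have "dist_var (post_dist F Sg K) = (\<integral>z. (post z - M)^2 \<partial>J)"
    unfolding dist_var_def pd_mean M_def[symmetric] by (rule pd_int) simp
  also have "\<dots> = (\<integral>z. M^2 + (-2*M) * post z + 1 * (post z)^2 \<partial>J)"
    by (rule Bochner_Integration.integral_cong) (simp_all add: power2_eq_square algebra_simps)
  also have "\<dots> = M^2 + (-2*M) * M + 1 * (\<integral>z. (post z)^2 \<partial>J)"
    using integral_quad[OF pJ ipost ipost2, of "M^2" "-2*M" 1] pm by (simp only:)
  finally have v: "dist_var (post_dist F Sg K) = (\<integral>z. (post z)^2 \<partial>J) - M^2"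
    by (simp add: power2_eq_square)
  have c: "(\<integral>z. post z * post z \<partial>J) = (\<integral>z. post z * fst z \<partial>J)"
    by (rule ce[OF postS ipf])
  have "Rres = (\<integral>z. ((fst z)^2 + (post z)^2) - 2 * (post z * fst z) \<partial>J)"
    unfolding Rres_def
    by (rule Bochner_Integration.integral_cong) (simp_all add: power2_eq_square algebra_simps)
  also have "\<dots> = ((\<integral>z. (fst z)^2 \<partial>J) + (\<integral>z. (post z)^2 \<partial>J)) - 2 * (\<integral>z. post z * fst z \<partial>J)"
    using ifst2 ipost2 ipf
    by (simp add: Bochner_Integration.integral_add Bochner_Integration.integral_diff)
  also have "\<dots> = (\<integral>z. (fst z)^2 \<partial>J) - (\<integral>z. (post z)^2 \<partial>J)"
    using c by (simp add: power2_eq_square)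
  finally have r: "Rres = (\<integral>\<theta>. \<theta>^2 \<partial>F) - (\<integral>z. (post z)^2 \<partial>J)" using int_fst2 by simp
  show ?thesis using v r unfolding M_def by simp
qed

end

lemma blackwell_R:
  fixes Sg1 :: "'b measure" and Sg2 :: "'c measure"
  assumes j1: "jsetup F Sg1 K1 \<alpha> \<beta>" and j2: "jsetup F Sg2 K2 \<alpha> \<beta>"
    and g: "g \<in> Sg1 \<rightarrow>\<^sub>M prob_algebra Sg2" and eq: "\<forall>\<theta>. K2 \<theta> = K1 \<theta> \<bind> g"
  shows "jsetup.Rres F Sg1 K1 \<le> jsetup.Rres F Sg2 K2"
proof -
  interpret A: jsetup F Sg1 K1 \<alpha> \<beta> by (rule j1)
  interpret B: jsetup F Sg2 K2 \<alpha> \<beta> by (rule j2)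
  let ?R = "\<bar>\<alpha>\<bar> + \<bar>\<beta>\<bar>"
  obtain h where hm: "h \<in> borel_measurable Sg2" and hb: "\<forall>s\<in>space Sg2. h s \<in> {\<alpha>..\<beta>}"
    and hae: "AE z in B.J. B.post z = h (snd z)" using B.factor by blast
  have gs: "g \<in> Sg1 \<rightarrow>\<^sub>M subprob_algebra Sg2" by (rule measurable_prob_algebraD[OF g])
  have gx: "prob_space (g x) \<and> sets (g x) = sets Sg2" if "x \<in> space Sg1" for x
    using measurable_space[OF g that] by (simp add: space_prob_algebra)
  have gsp: "space (g x) = space Sg2" if "x \<in> space Sg1" for x
    using gx[OF that] sets_eq_imp_space_eq by blast
  define f where "f = (\<lambda>x. \<integral>s. h s \<partial>g x)"
  define q where "q = (\<lambda>x. \<integral>s. (h s)^2 \<partial>g x)"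
  have fm: "f \<in> borel_measurable Sg1" unfolding f_def
    using measurable_comp[OF gs integral_measurable_subprob_algebra[OF hm]] by (simp only: comp_def)
  have h2m: "(\<lambda>s. (h s)^2) \<in> borel_measurable Sg2" using hm by measurable
  have qm: "q \<in> borel_measurable Sg1" unfolding q_def
    using measurable_comp[OF gs integral_measurable_subprob_algebra[OF h2m]] by (simp only: comp_def)
  have ginfo: "integrable (g x) h \<and> integrable (g x) (\<lambda>s. (h s)^2) \<and> f x \<in> {\<alpha>..\<beta>} \<and> \<bar>q x\<bar> \<le> ?R * ?R \<and> q x \<ge> (f x)^2"
    if x: "x \<in> space Sg1" for x
  proof -
    interpret G: prob_space "g x" using gx[OF x] by blast
    have hmx: "h \<in> borel_measurable (g x)" by (subst measurable_cong_sets[OF conjunct2[OF gx[OF x]] refl]) (rule hm)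
    have hae: "AE s in g x. h s \<in> {\<alpha>..\<beta>}" by (rule AE_I2) (use hb gsp[OF x] in blast)
    have ih: "integrable (g x) h"
    proof (rule G.integrable_const_bound[of _ ?R])
      show "AE s in g x. norm (h s) \<le> ?R" using hae by eventually_elim (simp only: real_norm_def in_bd)
    qed (rule hmx)
    have ih2: "integrable (g x) (\<lambda>s. (h s)^2)"
    proof (rule G.integrable_const_bound[of _ "?R * ?R"])
      show "AE s in g x. norm ((h s)^2) \<le> ?R * ?R" using hae
        by eventually_elim (simp only: real_norm_def, rule abs_sq_bd[OF in_bd])
      show "(\<lambda>s. (h s)^2) \<in> borel_measurable (g x)" using hmx by measurable
    qed
    have f1: "f x \<ge> \<alpha>" unfolding f_def by (rule G.integral_ge_const[OF ih]) (use hae in auto)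
    have f2: "f x \<le> \<beta>" unfolding f_def by (rule G.integral_le_const[OF ih]) (use hae in auto)
    have q1: "q x \<ge> 0" unfolding q_def by simp
    have q2: "q x \<le> ?R * ?R" unfolding q_def
    proof (rule G.integral_le_const[OF ih2])
      show "AE s in g x. (h s)^2 \<le> ?R * ?R" using hae
      proof eventually_elim
        case (elim s)
        show ?case using abs_sq_bd[OF in_bd[OF elim]] by (rule abs_le_D1)
      qed
    qed
    have "0 \<le> (\<integral>s. (h s - f x)^2 \<partial>g x)" by simp
    also have "\<dots> = (\<integral>s. (f x)^2 + (-2 * f x) * h s + 1 * (h s)^2 \<partial>g x)"
      by (rule Bochner_Integration.integral_cong) (simp_all add: power2_eq_square algebra_simps)
    also have "\<dots> = (f x)^2 + (-2 * f x) * f x + 1 * q x"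
      unfolding integral_quad[OF G.prob_space_axioms ih ih2] f_def q_def ..
    finally have q3: "q x \<ge> (f x)^2" by (simp add: power2_eq_square)
    show ?thesis using ih ih2 f1 f2 q1 q2 q3 by auto
  qed
  define \<psi> where "\<psi> = (\<lambda>z. (clip \<alpha> \<beta> (fst z) - f (snd z))^2 + (q (snd z) - (f (snd z))^2))"
  have \<psi>m: "\<psi> \<in> borel_measurable (borel \<Otimes>\<^sub>M Sg1)" unfolding \<psi>_def using fm qm by measurable
  have \<psi>b: "\<bar>\<psi> z\<bar> \<le> (?R+?R)*(?R+?R) + (?R*?R + ?R*?R)" if z: "z \<in> space (borel \<Otimes>\<^sub>M Sg1)" for z
  proof -
    have s: "snd z \<in> space Sg1" using z by (simp add: space_pair_measure mem_Times_iff)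
    have c: "\<bar>clip \<alpha> \<beta> (fst z)\<bar> \<le> ?R" by (rule in_bd[OF clip_in[OF A.ab]])
    have fz: "\<bar>f (snd z)\<bar> \<le> ?R" using ginfo[OF s] in_bd by blast
    have a1: "\<bar>(clip \<alpha> \<beta> (fst z) - f (snd z))^2\<bar> \<le> (?R+?R)*(?R+?R)"
      by (rule abs_sq_bd[OF abs_diff_bd[OF c fz]])
    have a2: "\<bar>q (snd z) - (f (snd z))^2\<bar> \<le> ?R*?R + ?R*?R"
      by (rule abs_diff_bd) (use ginfo[OF s] abs_sq_bd[OF fz] in auto)
    show ?thesis unfolding \<psi>_def using a1 a2 abs_triangle_ineq[of "(clip \<alpha> \<beta> (fst z) - f (snd z))^2" "q (snd z) - (f (snd z))^2"]
      by linarith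
  qed
  have hmJ: "(\<lambda>z. h (snd z)) \<in> borel_measurable B.J" using measurable_comp[OF B.sndm hm] by (simp only: comp_def)
  have "B.Rres = (\<integral>z. (fst z - h (snd z))^2 \<partial>B.J)"
    unfolding B.Rres_def
    by (rule integral_cong_AE) (use B.fstm B.postJ hmJ hae in \<open>measurable, measurable, auto\<close>)
  also have "\<dots> = (\<integral>z. (clip \<alpha> \<beta> (fst z) - h (snd z))^2 \<partial>B.J)"
    by (rule integral_cong_AE) (use B.fstm hmJ B.AE_fst in \<open>measurable, measurable, auto simp: clip_id\<close>)
  also have "\<dots> = (\<integral>\<theta>. (\<integral>s. (\<lambda>z. (clip \<alpha> \<beta> (fst z) - h (snd z))^2) (\<theta>, s) \<partial>K2 \<theta>) \<partial>F)"
  proof (rule B.J_int[of _ "(?R+?R)*(?R+?R)"])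
    show "(\<lambda>z. (clip \<alpha> \<beta> (fst z) - h (snd z))^2) \<in> borel_measurable ((borel :: real measure) \<Otimes>\<^sub>M Sg2)" using hm by measurable
    fix z :: "real \<times> 'c" assume z: "z \<in> space ((borel :: real measure) \<Otimes>\<^sub>M Sg2)"
    have s: "snd z \<in> space Sg2" using z by (simp add: space_pair_measure mem_Times_iff)
    show "\<bar>(clip \<alpha> \<beta> (fst z) - h (snd z))^2\<bar> \<le> (?R+?R)*(?R+?R)"
      by (rule abs_sq_bd[OF abs_diff_bd[OF in_bd[OF clip_in[OF A.ab]] in_bd]]) (use hb s in blast)
  qed
  also have "\<dots> = (\<integral>\<theta>. (\<integral>s. \<psi> (\<theta>, s) \<partial>K1 \<theta>) \<partial>F)"
  proof (rule Bochner_Integration.integral_cong[OF refl])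
    fix \<theta>
    let ?c = "clip \<alpha> \<beta> \<theta>"
    interpret K1: prob_space "K1 \<theta>" by (rule A.Kth(1))
    have gK: "g \<in> K1 \<theta> \<rightarrow>\<^sub>M subprob_algebra Sg2"
      by (subst measurable_cong_sets[OF A.Kth(2) refl]) (rule gs)
    have fin: "finite_measure (K1 \<theta>)" using K1.prob_space_axioms unfolding prob_space_def by (rule conjunct1)
    have Mb: "AE x in K1 \<theta>. emeasure (g x) (space (g x)) \<le> ennreal 1"
    proof (rule AE_I2)
      fix x assume "x \<in> space (K1 \<theta>)"
      then have x: "x \<in> space Sg1" using A.Kth(3) by simp
      have "emeasure (g x) (space (g x)) = 1" using gx[OF x] prob_space.emeasure_space_1 by blast
      then show "emeasure (g x) (space (g x)) \<le> ennreal 1" by simp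
    qed
    have phm: "(\<lambda>s. (?c - h s)^2) \<in> borel_measurable Sg2" using hm by measurable
    have phb: "\<bar>(?c - h s)^2\<bar> \<le> (?R+?R)*(?R+?R)" if "s \<in> space Sg2" for s
      by (rule abs_sq_bd[OF abs_diff_bd[OF in_bd[OF clip_in[OF A.ab]] in_bd]]) (use hb that in blast)
    have "(\<integral>s. (\<lambda>z. (clip \<alpha> \<beta> (fst z) - h (snd z))^2) (\<theta>, s) \<partial>K2 \<theta>) = (\<integral>s. (?c - h s)^2 \<partial>(K1 \<theta> \<bind> g))"
      using eq by simp
    also have "\<dots> = (\<integral>x. (\<integral>s. (?c - h s)^2 \<partial>g x) \<partial>K1 \<theta>)"
      by (rule integral_bind[OF phm phb gK fin Mb])
    also have "\<dots> = (\<integral>x. \<psi> (\<theta>, x) \<partial>K1 \<theta>)"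
    proof (rule Bochner_Integration.integral_cong[OF refl])
      fix x assume "x \<in> space (K1 \<theta>)"
      then have x: "x \<in> space Sg1" using A.Kth(3) by simp
      interpret G: prob_space "g x" using gx[OF x] by blast
      have ih: "integrable (g x) h" and ih2: "integrable (g x) (\<lambda>s. (h s)^2)" using ginfo[OF x] by auto
      have "(\<integral>s. (?c - h s)^2 \<partial>g x) = (\<integral>s. ?c^2 + (-2 * ?c) * h s + 1 * (h s)^2 \<partial>g x)"
        by (rule Bochner_Integration.integral_cong) (simp_all add: power2_eq_square algebra_simps)
      also have "\<dots> = ?c^2 + (-2 * ?c) * f x + 1 * q x"
        unfolding integral_quad[OF G.prob_space_axioms ih ih2] f_def q_def ..
      also have "\<dots> = \<psi> (\<theta>, x)" unfolding \<psi>_def by (simp add: power2_eq_square algebra_simps)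
      finally show "(\<integral>s. (?c - h s)^2 \<partial>g x) = \<psi> (\<theta>, x)" .
    qed
    finally show "(\<integral>s. (\<lambda>z. (clip \<alpha> \<beta> (fst z) - h (snd z))^2) (\<theta>, s) \<partial>K2 \<theta>) = (\<integral>s. \<psi> (\<theta>, s) \<partial>K1 \<theta>)" .
  qed
  also have "\<dots> = (\<integral>z. \<psi> z \<partial>A.J)"
    by (rule A.J_int[symmetric, OF \<psi>m \<psi>b])
  finally have R2: "B.Rres = (\<integral>z. \<psi> z \<partial>A.J)" .
  have fb: "\<forall>s\<in>space Sg1. f s \<in> {\<alpha>..\<beta>}" using ginfo by blast
  have fmJ: "(\<lambda>z. f (snd z)) \<in> borel_measurable A.J" using measurable_comp[OF A.sndm fm] by (simp only: comp_def)
  have "A.Rres \<le> (\<integral>z. (fst z - f (snd z))^2 \<partial>A.J)"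
    unfolding A.Rres_def by (rule A.opt[OF fm fb])
  also have "\<dots> = (\<integral>z. (clip \<alpha> \<beta> (fst z) - f (snd z))^2 \<partial>A.J)"
    by (rule integral_cong_AE) (use A.fstm fmJ A.AE_fst in \<open>measurable, measurable, auto simp: clip_id\<close>)
  also have "\<dots> \<le> (\<integral>z. \<psi> z \<partial>A.J)"
  proof (rule integral_mono)
    show "integrable A.J \<psi>"
      by (rule A.bint[OF A.measJ[OF \<psi>m], of "(?R+?R)*(?R+?R) + (?R*?R + ?R*?R)"])
         (rule AE_I2, rule \<psi>b, simp add: A.sJ[symmetric] sets_eq_imp_space_eq[OF A.sJ])
    show "integrable A.J (\<lambda>z. (clip \<alpha> \<beta> (fst z) - f (snd z))^2)"
    proof (rule A.bint[of _ "(?R+?R)*(?R+?R)"])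
      show "(\<lambda>z. (clip \<alpha> \<beta> (fst z) - f (snd z))^2) \<in> borel_measurable A.J" using A.fstm fmJ by measurable
      show "AE z in A.J. \<bar>(clip \<alpha> \<beta> (fst z) - f (snd z))^2\<bar> \<le> (?R+?R)*(?R+?R)"
      proof (rule AE_I2)
        fix z assume "z \<in> space A.J"
        then have s: "snd z \<in> space Sg1" by (rule A.spJ_mem)
        show "\<bar>(clip \<alpha> \<beta> (fst z) - f (snd z))^2\<bar> \<le> (?R+?R)*(?R+?R)"
          by (rule abs_sq_bd[OF abs_diff_bd[OF in_bd[OF clip_in[OF A.ab]] in_bd]]) (use fb s in blast)
      qed
    qed
    fix z assume "z \<in> space A.J"
    then have s: "snd z \<in> space Sg1" by (rule A.spJ_mem)
    show "(clip \<alpha> \<beta> (fst z) - f (snd z))^2 \<le> \<psi> z" unfolding \<psi>_def using ginfo[OF s] by simp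
  qed
  finally show ?thesis using R2 by simp
qed

lemma eff_mono:
  assumes "s1 \<le> s2"
  shows "(a > 0 \<longrightarrow> eff a b c \<mu> s2 \<le> eff a b c \<mu> s1) \<and> (a < 0 \<longrightarrow> eff a b c \<mu> s1 \<le> eff a b c \<mu> s2)"
proof -
  define k where "k = b^2 - a*(c-\<mu>)"
  have "a^2 * s1 \<le> a^2 * s2" using assms by (simp add: mult_left_mono)
  then have "sqrt (k^2 + a^2 * s1) \<le> sqrt (k^2 + a^2 * s2)" by simp
  then have "(k + sqrt (k^2 + a^2 * s1))/2 \<le> (k + sqrt (k^2 + a^2 * s2))/2" by simp
  then have u: "sqrt ((k + sqrt (k^2 + a^2 * s1))/2) \<le> sqrt ((k + sqrt (k^2 + a^2 * s2))/2)"
    by (rule real_sqrt_le_mono)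
  define u1 where "u1 = sqrt ((k + sqrt (k^2 + a^2 * s1))/2)"
  define u2 where "u2 = sqrt ((k + sqrt (k^2 + a^2 * s2))/2)"
  have u12: "u1 \<le> u2" using u unfolding u1_def u2_def .
  have e1: "a \<noteq> 0 \<Longrightarrow> eff a b c \<mu> s1 = (b - u1)/a" unfolding eff_def u1_def k_def by simp
  have e2: "a \<noteq> 0 \<Longrightarrow> eff a b c \<mu> s2 = (b - u2)/a" unfolding eff_def u2_def k_def by simp
  show ?thesis
  proof (intro conjI impI)
    assume a: "a > 0"
    show "eff a b c \<mu> s2 \<le> eff a b c \<mu> s1" using e1 e2 a u12
      by (simp add: divide_right_mono)
  next
    assume a: "a < 0"
    show "eff a b c \<mu> s1 \<le> eff a b c \<mu> s2" using e1 e2 a u12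
      by (simp add: divide_right_mono_neg)
  qed
qed

lemma eff_a0: "eff 0 b c \<mu> s = eff 0 b c \<mu> s'" by (simp add: eff_def)

lemma exp_eff:
  fixes Sg :: "'b measure"
  assumes b: "b > 0" and js: "jsetup F Sg K \<alpha> \<beta>"
  shows "exp_effort a b c F Sg K = eff a b c (\<integral>\<theta>. \<theta> \<partial>F) (post_var F Sg K)"
    "post_var F Sg K = (\<integral>\<theta>. \<theta>^2 \<partial>F) - (\<integral>\<theta>. \<theta> \<partial>F)^2 - jsetup.Rres F Sg K"
proof -
  interpret jsetup F Sg K \<alpha> \<beta> by (rule js)
  show "exp_effort a b c F Sg K = eff a b c (\<integral>\<theta>. \<theta> \<partial>F) (post_var F Sg K)"
    unfolding exp_effort_def post_var_def benchmark_eq[OF b pd_good] pd_mean ..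
  show "post_var F Sg K = (\<integral>\<theta>. \<theta>^2 \<partial>F) - (\<integral>\<theta>. \<theta> \<partial>F)^2 - Rres"
    unfolding post_var_def by (rule pd_var)
qed

theorem theorem5:
  fixes a b c \<alpha> \<beta> :: real and F :: "real measure"
    and \<Sigma>1 :: "'b measure" and \<Sigma>2 :: "'c measure"
  assumes "b > 0" and "c > 0"
    and "prob_space F" and "sets F = sets borel"
    and "prior_support F \<alpha> \<beta>" and "0 < \<alpha>" and "\<beta> < c"
  shows
    "(\<forall>K1 \<in> info_structs \<Sigma>1. \<forall>K2 \<in> info_structs \<Sigma>2.
        post_var F \<Sigma>1 K1 = post_var F \<Sigma>2 K2 \<longrightarrow>
        exp_effort a b c F \<Sigma>1 K1 = exp_effort a b c F \<Sigma>2 K2)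
   \<and> no_disclosure \<in> info_structs (count_space UNIV)
   \<and> full_disclosure \<in> info_structs borel
   \<and> (a > 0 \<longrightarrow> (\<forall>K \<in> info_structs \<Sigma>1.
        exp_effort a b c F \<Sigma>1 K \<le> exp_effort a b c F (count_space UNIV) no_disclosure))
   \<and> (a < 0 \<longrightarrow> (\<forall>K \<in> info_structs \<Sigma>1.
        exp_effort a b c F \<Sigma>1 K \<le> exp_effort a b c F borel full_disclosure))
   \<and> (a = 0 \<longrightarrow> (\<forall>K1 \<in> info_structs \<Sigma>1. \<forall>K2 \<in> info_structs \<Sigma>2.
        exp_effort a b c F \<Sigma>1 K1 = exp_effort a b c F \<Sigma>2 K2))
   \<and> (\<forall>K1 \<in> info_structs \<Sigma>1. \<forall>K2 \<in> info_structs \<Sigma>2.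
        more_informative \<Sigma>1 K1 \<Sigma>2 K2 \<longrightarrow>
        (a > 0 \<longrightarrow> exp_effort a b c F \<Sigma>1 K1 \<le> exp_effort a b c F \<Sigma>2 K2) \<and>
        (a < 0 \<longrightarrow> exp_effort a b c F \<Sigma>1 K1 \<ge> exp_effort a b c F \<Sigma>2 K2))"
proof -
  note b = assms(1)
  interpret PF: prob_space F by (rule assms(3))
  have ab: "\<alpha> \<le> \<beta>" and em: "emeasure F {\<alpha>..\<beta>} = 1" using assms(5) unfolding prior_support_def by auto
  have "measure F {\<alpha>..\<beta>} = 1" using em by (simp add: measure_def)
  then have aeF: "AE \<theta> in F. \<theta> \<in> {\<alpha>..\<beta>}" by (rule PF.AE_prob_1)
  have JS: "jsetup F Sg K \<alpha> \<beta>" if "K \<in> info_structs Sg" for Sg :: "'d measure" and K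
    unfolding jsetup_def using assms(3,4) that aeF ab by (simp add: info_structs_def)
  define M where "M = (\<integral>\<theta>. \<theta> \<partial>F)"
  define V where "V = (\<integral>\<theta>. \<theta>^2 \<partial>F) - (\<integral>\<theta>. \<theta> \<partial>F)^2"
  have EE: "exp_effort a b c F Sg K = eff a b c M (post_var F Sg K)"
    and PV: "post_var F Sg K = V - jsetup.Rres F Sg K"
    if "K \<in> info_structs Sg" for Sg :: "'d measure" and K
    using exp_eff[OF b JS[OF that]] unfolding M_def V_def by auto
  have BW: "post_var F Sg2 K2 \<le> post_var F Sg1 K1"
    if k1: "K1 \<in> info_structs Sg1" and k2: "K2 \<in> info_structs Sg2" and mi: "more_informative Sg1 K1 Sg2 K2"
    for Sg1 :: "'d measure" and Sg2 :: "'e measure" and K1 K2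
  proof -
    obtain g where g: "g \<in> Sg1 \<rightarrow>\<^sub>M prob_algebra Sg2" and eq: "\<forall>\<theta>. K2 \<theta> = K1 \<theta> \<bind> g"
      using mi unfolding more_informative_def by blast
    have "jsetup.Rres F Sg1 K1 \<le> jsetup.Rres F Sg2 K2"
      by (rule blackwell_R[OF JS[OF k1] JS[OF k2] g eq])
    then show ?thesis using PV[OF k1] PV[OF k2] by simp
  qed
  have ND: "no_disclosure \<in> info_structs (count_space UNIV)"
  proof -
    have "return (count_space UNIV) () \<in> space (prob_algebra (count_space (UNIV :: unit set)))"
      by (simp add: space_prob_algebra prob_space_return)
    then show ?thesis unfolding info_structs_def no_disclosure_def by simp
  qed
  have FD: "full_disclosure \<in> info_structs borel"
    unfolding info_structs_def full_disclosure_def by simp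
  have ND_less: "more_informative Sg K (count_space UNIV) no_disclosure" if k: "K \<in> info_structs Sg"
    for Sg :: "'d measure" and K
    unfolding more_informative_def
  proof (intro bexI allI)
    have r: "return (count_space UNIV) () \<in> space (prob_algebra (count_space (UNIV :: unit set)))"
      by (simp add: space_prob_algebra prob_space_return)
    then show "(\<lambda>s. return (count_space UNIV) ()) \<in> Sg \<rightarrow>\<^sub>M prob_algebra (count_space UNIV)" by simp
    fix \<theta>
    interpret jsetup F Sg K \<alpha> \<beta> by (rule JS[OF k])
    show "no_disclosure \<theta> = K \<theta> \<bind> (\<lambda>s. return (count_space UNIV) ())"
      unfolding no_disclosure_def
      by (rule bind_const'[symmetric, OF Kth(1)]) (simp add: subprob_space_return)
  qed
  have FD_more: "more_informative borel full_disclosure Sg K" if k: "K \<in> info_structs Sg"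
    for Sg :: "'d measure" and K
    unfolding more_informative_def
  proof (intro bexI allI)
    show "K \<in> borel \<rightarrow>\<^sub>M prob_algebra Sg" using k unfolding info_structs_def by simp
    fix \<theta>
    show "K \<theta> = full_disclosure \<theta> \<bind> K"
      unfolding full_disclosure_def
      by (rule bind_return[symmetric, OF measurable_prob_algebraD]) (use k in \<open>simp_all add: info_structs_def\<close>)
  qed
  show ?thesis
  proof (intro conjI)
    show "\<forall>K1 \<in> info_structs \<Sigma>1. \<forall>K2 \<in> info_structs \<Sigma>2.
        post_var F \<Sigma>1 K1 = post_var F \<Sigma>2 K2 \<longrightarrow>
        exp_effort a b c F \<Sigma>1 K1 = exp_effort a b c F \<Sigma>2 K2"
      using EE by metis
    show "no_disclosure \<in> info_structs (count_space UNIV)" by (rule ND)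
    show "full_disclosure \<in> info_structs borel" by (rule FD)
    show "a > 0 \<longrightarrow> (\<forall>K \<in> info_structs \<Sigma>1.
        exp_effort a b c F \<Sigma>1 K \<le> exp_effort a b c F (count_space UNIV) no_disclosure)"
    proof (intro impI ballI)
      fix K assume a: "a > 0" and k: "K \<in> info_structs \<Sigma>1"
      have "post_var F (count_space UNIV) no_disclosure \<le> post_var F \<Sigma>1 K"
        by (rule BW[OF k ND ND_less[OF k]])
      then show "exp_effort a b c F \<Sigma>1 K \<le> exp_effort a b c F (count_space UNIV) no_disclosure"
        unfolding EE[OF k] EE[OF ND] using eff_mono a by blast
    qed
    show "a < 0 \<longrightarrow> (\<forall>K \<in> info_structs \<Sigma>1.
        exp_effort a b c F \<Sigma>1 K \<le> exp_effort a b c F borel full_disclosure)"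
    proof (intro impI ballI)
      fix K assume a: "a < 0" and k: "K \<in> info_structs \<Sigma>1"
      have "post_var F \<Sigma>1 K \<le> post_var F borel full_disclosure"
        by (rule BW[OF FD k FD_more[OF k]])
      then show "exp_effort a b c F \<Sigma>1 K \<le> exp_effort a b c F borel full_disclosure"
        unfolding EE[OF k] EE[OF FD] using eff_mono a by blast
    qed
    show "a = 0 \<longrightarrow> (\<forall>K1 \<in> info_structs \<Sigma>1. \<forall>K2 \<in> info_structs \<Sigma>2.
        exp_effort a b c F \<Sigma>1 K1 = exp_effort a b c F \<Sigma>2 K2)"
      using EE eff_a0 by metis
    show "\<forall>K1 \<in> info_structs \<Sigma>1. \<forall>K2 \<in> info_structs \<Sigma>2.
        more_informative \<Sigma>1 K1 \<Sigma>2 K2 \<longrightarrow>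
        (a > 0 \<longrightarrow> exp_effort a b c F \<Sigma>1 K1 \<le> exp_effort a b c F \<Sigma>2 K2) \<and>
        (a < 0 \<longrightarrow> exp_effort a b c F \<Sigma>1 K1 \<ge> exp_effort a b c F \<Sigma>2 K2)"
    proof (intro ballI impI)
      fix K1 K2 assume k1: "K1 \<in> info_structs \<Sigma>1" and k2: "K2 \<in> info_structs \<Sigma>2"
        and mi: "more_informative \<Sigma>1 K1 \<Sigma>2 K2"
      have v: "post_var F \<Sigma>2 K2 \<le> post_var F \<Sigma>1 K1" by (rule BW[OF k1 k2 mi])
      show "(a > 0 \<longrightarrow> exp_effort a b c F \<Sigma>1 K1 \<le> exp_effort a b c F \<Sigma>2 K2) \<and>
        (a < 0 \<longrightarrow> exp_effort a b c F \<Sigma>1 K1 \<ge> exp_effort a b c F \<Sigma>2 K2)"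
        unfolding EE[OF k1] EE[OF k2] using eff_mono[OF v] by blast
    qed
  qed
qed

end
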